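(* The function $h$ satisfies $h(1)=0$, $h(2)=1$, and $h(n)=h\left(2^{\lceil\log_2 n\rceil}-n\right)+1$ for every integer $n>2$.
   Context: For $k\ge0$ and $0\le m<2^k$ let $\beta_k(m)\in\{0,1\}^k$ be the point whose $j$-th coordinate is the binary digit of $m$ of weight $2^{k-j}$. For $n\ge2$ with $k=\lceil\log_2 n\rceil$, a pair $(n_0,n_1)$ of integers with $n=n_0+n_1$, $n_0\ge n_1\ge1$ is a hypercubic bipartition (HCBP) of $n$ if for some $i\in\{1,\dots,k\}$ the hyperplane $x_i=1/2$ splits the points $\beta_k(0),\dots,\beta_k(n-1)$ into $n_0$ points on one side and $n_1$ on the other. For $n\ge 2$, $h(n)$ denotes the number of HCBPs of $n$; by convention $h(1)=0$ and $h(0)=0$. *)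

theory Defs
  imports Complex_Main
begin

text \<open>The point beta_k(m) in {0,1}^k, as a function of the coordinate index j (1 <= j <= k):
  its j-th coordinate is the binary digit of m of weight 2^(k-j).\<close>
definition beta :: "nat \<Rightarrow> nat \<Rightarrow> nat \<Rightarrow> real" where
  "beta k m j = real ((m div 2 ^ (k - j)) mod 2)"

definition hc_dim :: "nat \<Rightarrow> nat" where
  "hc_dim n = nat \<lceil>log 2 (real n)\<rceil>"

definition below :: "nat \<Rightarrow> nat \<Rightarrow> nat" where
  "below n i = card {m. m < n \<and> beta (hc_dim n) m i < 1/2}"

definition above :: "nat \<Rightarrow> nat \<Rightarrow> nat" where
  "above n i = card {m. m < n \<and> beta (hc_dim n) m i > 1/2}"

definition HCBP :: "nat \<Rightarrow> (nat \<times> nat) set" where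
  "HCBP n = {(n0, n1). n = n0 + n1 \<and> n0 \<ge> n1 \<and> n1 \<ge> 1 \<and>
      (\<exists>i\<in>{1..hc_dim n}. (below n i = n0 \<and> above n i = n1) \<or> (below n i = n1 \<and> above n i = n0))}"

definition h :: "nat \<Rightarrow> nat" where
  "h n = (if n < 2 then 0 else card (HCBP n))"

end

theory Submission
  imports Defs
begin

definition bt :: "nat \<Rightarrow> nat \<Rightarrow> nat" where
  "bt d m = m div 2 ^ d mod 2"

definition ones :: "nat \<Rightarrow> nat \<Rightarrow> nat" where
  "ones n d = (\<Sum>m<n. bt d m)"

definition pr :: "nat \<Rightarrow> nat \<Rightarrow> nat \<times> nat" where
  "pr n d = (max (n - ones n d) (ones n d), min (n - ones n d) (ones n d))"

lemma bt_le1: "bt d m \<le> 1"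
  unfolding bt_def by simp

lemma bt_cases: "bt d m = 0 \<or> bt d m = 1"
  unfolding bt_def by auto

lemma ones_le: "ones n d \<le> n"
proof -
  have "ones n d \<le> (\<Sum>m<n. 1)" unfolding ones_def by (rule sum_mono) (rule bt_le1)
  thus ?thesis by simp
qed

lemma card_ones: "card {m. m < n \<and> bt d m = 1} = ones n d \<and> card {m. m < n \<and> bt d m = 0} = n - ones n d"
proof (induction n)
  case 0 then show ?case by (simp add: ones_def)
next
  case (Suc n)
  have e1: "{m. m < Suc n \<and> bt d m = 1} = (if bt d n = 1 then insert n {m. m < n \<and> bt d m = 1} else {m. m < n \<and> bt d m = 1})"
    by (auto simp: less_Suc_eq)
  have e0: "{m. m < Suc n \<and> bt d m = 0} = (if bt d n = 0 then insert n {m. m < n \<and> bt d m = 0} else {m. m < n \<and> bt d m = 0})"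
    by (auto simp: less_Suc_eq)
  have o: "ones (Suc n) d = ones n d + bt d n" by (simp add: ones_def)
  have le: "ones n d \<le> n" by (rule ones_le)
  show ?case using Suc bt_cases[of d n] le unfolding e1 e0 o by auto
qed

lemma ones_zero: "m \<le> 2 ^ d \<Longrightarrow> ones m d = 0"
  unfolding ones_def bt_def by (auto intro!: sum.neutral)

lemma aux_arith:
  fixes q T r P :: nat
  assumes "q < T" "r < P"
  shows "T*P - 1 - (q*P+r) = (T-1-q)*P + (P-1-r)"
proof -
  obtain a where a: "T = Suc (q + a)" using assms(1) less_iff_Suc_add by blast
  have "T * P = q * P + a * P + P" unfolding a by (simp add: algebra_simps)
  moreover have "T - 1 - q = a" unfolding a by simp
  ultimately show ?thesis using assms(2) by simp
qed

lemma bt_compl: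
  assumes "d < k" "m < 2 ^ k"
  shows "bt d (2 ^ k - 1 - m) = 1 - bt d m"
proof -
  define q where "q = m div 2 ^ d"
  define r where "r = m mod 2 ^ d"
  define P where "P = (2::nat) ^ d"
  define T where "T = (2::nat) ^ (k - d)"
  have P0: "P > 0" unfolding P_def by simp
  have m: "m = q * P + r" unfolding q_def r_def P_def by (simp add: div_mult_mod_eq)
  have r: "r < P" unfolding r_def P_def by simp
  have pk: "(2::nat) ^ k = T * P" unfolding T_def P_def using assms(1) by (metis le_add_diff_inverse2 less_imp_le power_add)
  have q: "q < T"
  proof (rule ccontr)
    assume "\<not> q < T" hence "T * P \<le> q * P" by simp
    thus False using assms(2) unfolding pk m by linarith
  qed
  have e: "2 ^ k - 1 - m = (T - 1 - q) * P + (P - 1 - r)"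
    unfolding pk m by (rule aux_arith[OF q r])
  have "P - 1 - r < P" using P0 by simp
  hence dv: "(2 ^ k - 1 - m) div P = T - 1 - q" unfolding e using P0
    by (metis add.commute div_less div_mult_self1 less_not_refl2 add_0)
  have ev: "even T" unfolding T_def using assms(1) by simp
  have "(T - 1 - q) mod 2 = 1 - q mod 2"
  proof -
    obtain t where t: "T = 2 * t" using ev by blast
    have "q < 2 * t" using q t by simp
    hence s: "(2 * t - 1 - q) + (q + 1) = 2 * t" by linarith
    have "even ((2 * t - 1 - q) + (q + 1))" unfolding s by simp
    hence eo: "even (2 * t - 1 - q) = odd q" by simp
    show ?thesis
    proof (cases "even q")
      case True
      then show ?thesis using eo t by (simp add: odd_iff_mod_2_eq_one even_iff_mod_2_eq_zero)
    next
      case False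
      then show ?thesis using eo t by (simp add: odd_iff_mod_2_eq_one even_iff_mod_2_eq_zero)
    qed
  qed
  thus ?thesis unfolding bt_def using dv q_def P_def by simp
qed

lemma total_ones:
  assumes "d < k"
  shows "2 * ones (2 ^ k) d = 2 ^ k"
proof -
  have "ones (2^k) d = (\<Sum>i<2^k. bt d (2^k - Suc i))" unfolding ones_def
    by (rule sum.nat_diff_reindex[symmetric])
  also have "\<dots> = (\<Sum>i<2^k. 1 - bt d i)"
  proof (rule sum.cong)
    fix x assume "x \<in> {..<(2::nat)^k}"
    hence "x < 2^k" by simp
    moreover have "(2::nat) ^ k - Suc x = 2 ^ k - 1 - x" by simp
    ultimately show "bt d (2 ^ k - Suc x) = 1 - bt d x" using bt_compl[OF assms] by metis
  qed simp
  finally have a: "ones (2^k) d = (\<Sum>i<(2::nat)^k. 1 - bt d i)" .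
  have "ones (2^k) d + (\<Sum>i<(2::nat)^k. 1 - bt d i) = (\<Sum>i<(2::nat)^k. bt d i + (1 - bt d i))"
    unfolding ones_def by (simp add: sum.distrib)
  also have "\<dots> = (\<Sum>i<(2::nat)^k. 1)" using bt_le1 by (intro sum.cong) auto
  finally show ?thesis using a by simp
qed

lemma ones_rel:
  assumes "d < k" "n \<le> 2 ^ k"
  shows "ones n d + ((2^k - n) - ones (2^k - n) d) = 2 ^ (k - 1)"
proof -
  define m' where "m' = 2 ^ k - n"
  have tail: "(\<Sum>m\<in>{n..<2^k}. bt d m) = (\<Sum>j<m'. 1 - bt d j)"
  proof -
    have "(\<Sum>m\<in>{n..<2^k}. bt d m) = (\<Sum>j<m'. bt d (2^k - 1 - j))"
      by (rule sum.reindex_bij_witness[of _ "\<lambda>j. 2^k - 1 - j" "\<lambda>m. 2^k - 1 - m"])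
         (use assms in \<open>auto simp: m'_def\<close>)
    also have "\<dots> = (\<Sum>j<m'. 1 - bt d j)"
    proof (rule sum.cong)
      fix x assume "x \<in> {..<m'}"
      hence "x < 2^k" unfolding m'_def by simp
      thus "bt d (2 ^ k - 1 - x) = 1 - bt d x" using bt_compl[OF assms(1)] by metis
    qed simp
    finally show ?thesis .
  qed
  have "(\<Sum>j<m'. 1 - bt d j) + ones m' d = (\<Sum>j<m'. 1)"
    unfolding ones_def sum.distrib[symmetric] using bt_le1 by (intro sum.cong) auto
  hence t2: "(\<Sum>j<m'. 1 - bt d j) = m' - ones m' d" by simp
  have s1: "ones (2^k) d = ones n d + (\<Sum>m\<in>{n..<2^k}. bt d m)"
    unfolding ones_def lessThan_atLeast0
    using sum.atLeastLessThan_concat[of 0 n "2^k" "bt d"] assms by simp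
  define K where "K = (2::nat) ^ (k - 1)"
  have k2: "(2::nat) ^ k = 2 * K" unfolding K_def using assms(1)
    by (metis Suc_diff_1 gr_implies_not0 not_gr_zero power_Suc)
  have tot: "2 * ones (2^k) d = 2 ^ k" by (rule total_ones[OF assms(1)])
  have "ones (2^k) d = K" using tot unfolding k2 by simp
  hence "ones n d + (m' - ones m' d) = K" using s1 tail t2 by simp
  thus ?thesis unfolding m'_def K_def .
qed

lemma pr_arith:
  fixes o1 o2 m n K :: nat
  assumes "o1 + (m - o2) = K" "o2 \<le> m" "m < K" "n + m = 2 * K"
  shows "(max (n - o1) o1, min (n - o1) o1) = (K - min (m - o2) o2, K - max (m - o2) o2)"
proof -
  have a: "o1 = K - (m - o2)" using assms(1) by linarith
  have b: "n - o1 = K - o2" using assms by linarith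
  have c: "\<And>x y::nat. x \<le> K \<Longrightarrow> y \<le> K \<Longrightarrow>
     (max (K - x) (K - y), min (K - x) (K - y)) = (K - min y x, K - max y x)"
  proof -
    fix x y :: nat assume "x \<le> K" "y \<le> K"
    show "(max (K - x) (K - y), min (K - x) (K - y)) = (K - min y x, K - max y x)"
    proof (cases "x \<le> y")
      case True
      hence "K - y \<le> K - x" by (rule diff_le_mono2)
      thus ?thesis using True by (simp add: max_absorb1 min_absorb2 max_absorb2 min_absorb1)
    next
      case False
      hence "K - x \<le> K - y" by (intro diff_le_mono2) simp
      thus ?thesis using False by (simp add: max_absorb1 min_absorb2 max_absorb2 min_absorb1)
    qed
  qed
  have "(max (n - o1) o1, min (n - o1) o1) = (max (K - o2) (K - (m - o2)), min (K - o2) (K - (m - o2)))"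
    apply (simp only: b)
    apply (simp only: a)
    done
  also have "\<dots> = (K - min (m - o2) o2, K - max (m - o2) o2)"
    by (rule c) (use assms in linarith)+
  finally show ?thesis .
qed

lemma pr_rel:
  assumes "d < k" "2 ^ (k - 1) < n" "n \<le> 2 ^ k"
  shows "pr n d = (2^(k-1) - snd (pr (2^k - n) d), 2^(k-1) - fst (pr (2^k - n) d))"
    and "2^k - n < 2^(k-1)"
proof -
  define K where "K = (2::nat) ^ (k - 1)"
  have k2: "(2::nat) ^ k = 2 * K" unfolding K_def using assms(1)
    by (metis Suc_diff_1 gr_implies_not0 not_gr_zero power_Suc)
  show lt: "2^k - n < 2^(k-1)" using assms(2,3) unfolding k2 K_def[symmetric] by linarith
  define m' where "m' = 2 ^ k - n"
  have r: "ones n d + (m' - ones m' d) = K" using ones_rel[OF assms(1,3)] m'_def K_def by simp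
  have le: "ones m' d \<le> m'" by (rule ones_le)
  have nm: "n + m' = 2 * K" using assms(3) unfolding m'_def k2 by simp
  have mK: "m' < K" using lt unfolding m'_def K_def .
  show "pr n d = (2^(k-1) - snd (pr (2^k - n) d), 2^(k-1) - fst (pr (2^k - n) d))"
  proof -
    have "pr n d = (K - snd (pr m' d), K - fst (pr m' d))"
      unfolding pr_def fst_conv snd_conv by (rule pr_arith[OF r le mK nm])
    thus ?thesis unfolding m'_def K_def .
  qed
qed

lemma hc_dim_eq:
  assumes "k \<ge> 1" "2 ^ (k - 1) < n" "n \<le> 2 ^ k"
  shows "hc_dim n = k"
proof -
  have n0: "n > 0" using assms(2) by linarith
  have a: "log 2 n \<le> k" using log2_of_power_le[OF assms(3) n0] .
  have b: "real (k - 1) < log 2 n" using less_log2_of_power[OF assms(2)] .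
  have "\<lceil>log 2 (real n)\<rceil> = int k"
  proof (rule ceiling_unique)
    have "real (k - 1) = real k - 1" using assms(1) by (simp add: of_nat_diff)
    thus "real_of_int (int k) - 1 < log 2 (real n)" using b by simp
    show "log 2 (real n) \<le> real_of_int (int k)" using a by simp
  qed
  thus ?thesis unfolding hc_dim_def by simp
qed

lemma hc_dim_ex:
  assumes "n \<ge> 2"
  shows "hc_dim n \<ge> 1 \<and> 2 ^ (hc_dim n - 1) < n \<and> n \<le> 2 ^ hc_dim n"
proof -
  have ex: "\<exists>k. n \<le> 2 ^ k" by (metis less_exp less_imp_le)
  define k where "k = (LEAST k. n \<le> 2 ^ k)"
  have k: "n \<le> 2 ^ k" unfolding k_def by (rule LeastI_ex[OF ex])
  have k1: "k \<ge> 1" using k assms by (cases k) auto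
  have "\<not> n \<le> 2 ^ (k - 1)"
  proof
    assume "n \<le> 2 ^ (k - 1)"
    hence "k \<le> k - 1" unfolding k_def by (rule Least_le)
    thus False using k1 by simp
  qed
  hence "hc_dim n = k" using hc_dim_eq[OF k1 _ k] by simp
  thus ?thesis using k k1 \<open>\<not> n \<le> 2 ^ (k - 1)\<close> by simp
qed


lemma fst_pr_le: "fst (pr m d) \<le> m"
  unfolding pr_def fst_conv by (intro max.boundedI diff_le_self ones_le)

lemma snd_pr_le: "snd (pr m d) \<le> m"
  unfolding pr_def snd_conv by (rule order.trans[OF min.cobounded1 diff_le_self])

lemma snd_pos:
  assumes "n \<ge> 2" "d < hc_dim n"
  shows "snd (pr n d) \<ge> 1"
proof -
  define k where "k = hc_dim n"
  have b: "k \<ge> 1" "2 ^ (k - 1) < n" "n \<le> 2 ^ k" using hc_dim_ex[OF assms(1)] k_def by auto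
  have dk: "d < k" using assms(2) k_def by simp
  have e: "snd (pr n d) = 2^(k-1) - fst (pr (2^k - n) d)" using pr_rel(1)[OF dk b(2,3)] by (metis snd_conv)
  have "fst (pr (2^k - n) d) < 2^(k-1)"
    using fst_pr_le[of "2^k - n" d] pr_rel(2)[OF dk b(2,3)] by linarith
  thus ?thesis unfolding e by linarith
qed

lemma pr_zero: "m \<le> 2 ^ d \<Longrightarrow> pr m d = (m, 0)"
  unfolding pr_def ones_zero[of m d] by simp

lemma beta_bt: "beta k m i = real (bt (k - i) m)"
  by (simp add: beta_def bt_def)

lemma below_eq: "below n i = n - ones n (hc_dim n - i)"
proof -
  have "{m. m < n \<and> beta (hc_dim n) m i < 1/2} = {m. m < n \<and> bt (hc_dim n - i) m = 0}"
  proof -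
    have "\<And>m. (real (bt (hc_dim n - i) m) < 1/2) = (bt (hc_dim n - i) m = 0)"
    proof -
      fix m show "(real (bt (hc_dim n - i) m) < 1/2) = (bt (hc_dim n - i) m = 0)"
        using bt_cases[of "hc_dim n - i" m] by auto
    qed
    thus ?thesis by (simp add: beta_bt)
  qed
  thus ?thesis unfolding below_def using card_ones by simp
qed

lemma above_eq: "above n i = ones n (hc_dim n - i)"
proof -
  have "{m. m < n \<and> beta (hc_dim n) m i > 1/2} = {m. m < n \<and> bt (hc_dim n - i) m = 1}"
  proof -
    have "\<And>m. (real (bt (hc_dim n - i) m) > 1/2) = (bt (hc_dim n - i) m = 1)"
    proof -
      fix m show "(real (bt (hc_dim n - i) m) > 1/2) = (bt (hc_dim n - i) m = 1)"
        using bt_cases[of "hc_dim n - i" m] by auto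
    qed
    thus ?thesis by (simp add: beta_bt)
  qed
  thus ?thesis unfolding above_def using card_ones by simp
qed

lemma HCBP_eq: "HCBP n = {p \<in> pr n ` {..<hc_dim n}. 1 \<le> snd p}"
proof -
  define k where "k = hc_dim n"
  have le: "\<And>d. ones n d \<le> n" by (rule ones_le)
  show ?thesis
  proof (intro set_eqI iffI)
    fix p assume "p \<in> HCBP n"
    then obtain n0 n1 i where p: "p = (n0, n1)" and s: "n = n0 + n1" "n0 \<ge> n1" "n1 \<ge> 1"
      and i: "i \<in> {1..k}"
      and c: "(below n i = n0 \<and> above n i = n1) \<or> (below n i = n1 \<and> above n i = n0)"
      unfolding HCBP_def k_def by blast
    define d where "d = k - i"
    have dk: "d < k" using i d_def by auto
    have c': "(n - ones n d = n0 \<and> ones n d = n1) \<or> (n - ones n d = n1 \<and> ones n d = n0)"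
      using c unfolding below_eq above_eq k_def[symmetric] d_def .
    have "pr n d = (n0, n1)" using c' s le[of d] unfolding pr_def by (auto simp: max_def min_def)
    thus "p \<in> {p \<in> pr n ` {..<hc_dim n}. 1 \<le> snd p}" using dk s p k_def by force
  next
    fix p assume "p \<in> {p \<in> pr n ` {..<hc_dim n}. 1 \<le> snd p}"
    then obtain d where dk: "d < k" and p: "p = pr n d" and s1: "1 \<le> snd p" using k_def by auto
    define i where "i = k - d"
    have i: "i \<in> {1..k}" using dk i_def by auto
    have di: "k - i = d" using dk i_def by simp
    have lo: "ones n d \<le> n" by (rule le)
    define x where "x = n - ones n d"
    define y where "y = ones n d"
    have pp: "p = (max x y, min x y)" unfolding p pr_def x_def y_def ..
    have f1: "n = max x y + min x y" using lo unfolding x_def y_def by (auto simp: max_def min_def)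
    have f2: "min x y \<le> max x y" by simp
    have f3: "1 \<le> min x y" using s1 unfolding pp by simp
    have f4: "(below n i = max x y \<and> above n i = min x y) \<or> (below n i = min x y \<and> above n i = max x y)"
      unfolding below_eq above_eq k_def[symmetric] di x_def[symmetric] y_def[symmetric]
      using x_def y_def by (auto simp: max_def min_def)
    have i': "i \<in> {1..hc_dim n}" using i k_def by simp
    show "p \<in> HCBP n"
      unfolding HCBP_def pp mem_Collect_eq prod.case using f1 f2 f3 f4 i' by blast
  qed
qed

lemma h_eq:
  assumes "n \<ge> 2"
  shows "h n = card (pr n ` {..<hc_dim n})"
proof -
  have "HCBP n = pr n ` {..<hc_dim n}"
    unfolding HCBP_eq using snd_pos[OF assms] by auto
  thus ?thesis unfolding h_def using assms by simp
qed

lemma main_rec: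
  assumes "n \<ge> 2"
  shows "h n = h (2 ^ hc_dim n - n) + 1"
proof -
  define k where "k = hc_dim n"
  have b: "k \<ge> 1" "2 ^ (k - 1) < n" "n \<le> 2 ^ k" using hc_dim_ex[OF assms(1)] k_def by auto
  define m where "m = 2 ^ k - n"
  define K where "K = (2::nat) ^ (k - 1)"
  have mK: "m < K" unfolding m_def K_def using pr_rel(2)[OF _ b(2,3), of 0] b(1) by simp
  define g where "g = (\<lambda>p::nat\<times>nat. (K - snd p, K - fst p))"
  have img: "pr n ` {..<k} = g ` (pr m ` {..<k})"
    unfolding image_image g_def
  proof (rule image_cong[OF refl])
    fix d assume "d \<in> {..<k}"
    hence "d < k" by simp
    thus "pr n d = (K - snd (pr m d), K - fst (pr m d))"
      using pr_rel(1)[OF _ b(2,3)] unfolding m_def K_def by blast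
  qed
  have inj: "inj_on g (pr m ` {..<k})"
  proof (rule inj_onI)
    fix p q assume p: "p \<in> pr m ` {..<k}" and q: "q \<in> pr m ` {..<k}" and e: "g p = g q"
    have fK: "\<And>d. fst (pr m d) \<le> K" using fst_pr_le[of m] mK by (meson le_trans less_imp_le)
    have sK: "\<And>d. snd (pr m d) \<le> K" using snd_pr_le[of m] mK by (meson le_trans less_imp_le)
    have "fst p \<le> K" "snd p \<le> K" "fst q \<le> K" "snd q \<le> K"
      using p q fK sK by auto
    thus "p = q" using e unfolding g_def by (auto simp: prod_eq_iff)
  qed
  have c1: "h n = card (pr m ` {..<k})"
    unfolding h_eq[OF assms] k_def[symmetric] img using card_image[OF inj] .
  have c2: "card (pr m ` {..<k}) = h m + 1"
  proof (cases "m \<le> 1")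
    case True
    have "pr m ` {..<k} = {(m, 0)}"
    proof -
      have "\<And>d. pr m d = (m, 0)" using True
        by (intro pr_zero) (meson le_trans one_le_power one_le_numeral)
      moreover have "0 \<in> {..<k}" using b(1) by simp
      ultimately show ?thesis by auto
    qed
    moreover have "h m = 0" using True unfolding h_def by simp
    ultimately show ?thesis by simp
  next
    case False
    hence m2: "m \<ge> 2" by simp
    define k' where "k' = hc_dim m"
    have b': "k' \<ge> 1" "2 ^ (k' - 1) < m" "m \<le> 2 ^ k'" using hc_dim_ex[OF m2] k'_def by auto
    have "(2::nat) ^ (k' - 1) < 2 ^ (k - 1)" using b'(2) mK K_def by linarith
    hence "k' - 1 < k - 1" using power_less_imp_less_exp by (metis one_less_numeral_iff semiring_norm(76))
    hence kk: "k' < k" using b(1) b'(1) by linarith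
    have split: "{..<k} = {..<k'} \<union> {k'..<k}" using kk by auto
    have tail: "pr m ` {k'..<k} = {(m, 0)}"
    proof -
      have "\<And>d. d \<in> {k'..<k} \<Longrightarrow> pr m d = (m, 0)"
      proof -
        fix d assume "d \<in> {k'..<k}"
        hence "k' \<le> d" by simp
        hence "(2::nat) ^ k' \<le> 2 ^ d" by (rule power_increasing) simp
        thus "pr m d = (m, 0)" using b'(3) by (intro pr_zero) linarith
      qed
      moreover have "k' \<in> {k'..<k}" using kk by simp
      ultimately show ?thesis by auto
    qed
    have notin: "(m, 0) \<notin> pr m ` {..<k'}"
    proof
      assume "(m, 0) \<in> pr m ` {..<k'}"
      then obtain d where "d < k'" "pr m d = (m, 0)" by auto
      thus False using snd_pos[OF m2, of d] k'_def by simp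
    qed
    have "pr m ` {..<k} = insert (m, 0) (pr m ` {..<k'})"
      unfolding split image_Un tail by auto
    hence "card (pr m ` {..<k}) = card (pr m ` {..<k'}) + 1"
      using notin by simp
    thus ?thesis using h_eq[OF m2] k'_def by simp
  qed
  show ?thesis using c1 c2 m_def k_def by simp
qed

theorem corollary16:
  shows "h 1 = 0 \<and> h 2 = 1 \<and>
    (\<forall>n::nat. n > 2 \<longrightarrow> h n = h (2 ^ nat \<lceil>log 2 (real n)\<rceil> - n) + 1)"
proof (intro conjI allI impI)
  show "h 1 = 0" unfolding h_def by simp
  have "hc_dim 2 = 1" by (rule hc_dim_eq) auto
  thus "h 2 = 1" using main_rec[of 2] by (simp add: h_def)
  fix n :: nat assume "n > 2"
  thus "h n = h (2 ^ nat \<lceil>log 2 (real n)\<rceil> - n) + 1"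
    using main_rec[of n] unfolding hc_dim_def by simp
qed

end
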